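(* Let $\delta<\mathfrak t$ and let $\langle\bar\eta^\alpha:\alpha<\delta\rangle$ be a $\le^*$-increasing sequence of members of $\mathbf S$ (i.e. $\bar\eta^\alpha\le^*\bar\eta^\beta$ for $\alpha<\beta<\delta$). Then there is $\bar\eta\in\mathbf S$ with $\bar\eta^\alpha\le^*\bar\eta$ for all $\alpha<\delta$.
   Context: $\mathfrak t$ is the least length $\kappa$ of a sequence $\langle X_\alpha:\alpha<\kappa\rangle$ of infinite subsets of $\omega$ with $X_\beta\setminus X_\alpha$ finite for $\alpha<\beta$ and no infinite $X$ with $X\setminus X_\alpha$ finite for all $\alpha$. $\mathbf S$ is the family of all sequences $\bar\eta=\langle\eta_n:n\in B\rangle$ with $B\subseteq\omega$ infinite such that for each $n\in B$, $\eta_n$ is a function from the interval $[n,k)$ to $\{0,1\}$ for some $k\in(n,\omega)$; $\mathrm{dom}(\bar\eta)=B$. $\eta\trianglelefteq\nu$ means $\nu$ extends $\eta$. For $\bar\eta,\bar\nu\in\mathbf S$, $\bar\eta\le^*\bar\nu$ means that for all sufficiently large $n$, if $n\in\mathrm{dom}(\bar\nu)$ then $n\in\mathrm{dom}(\bar\eta)$ and $\eta_n\trianglelefteq\nu_n$. *)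

theory Defs
  imports Main "HOL-Library.Sublist"
begin

text \<open>The value eta_n is a nonempty
  list of booleans l, read as the function [n, n + length l) \<rightarrow> {0,1},
  i \<mapsto> l ! (i - n). The domain is {n. eta n \<noteq> None}.\<close>

definition inS :: "(nat \<Rightarrow> bool list option) \<Rightarrow> bool" where
  "inS eta \<longleftrightarrow> infinite {n. eta n \<noteq> None} \<and> (\<forall>n l. eta n = Some l \<longrightarrow> l \<noteq> [])"

text \<open>eta \<le>* nu: for all sufficiently large n, if n \<in> dom nu then n \<in> dom eta
  and eta_n is extended by nu_n (both start at n, so extension = list prefix).\<close>

definition le_star :: "(nat \<Rightarrow> bool list option) \<Rightarrow> (nat \<Rightarrow> bool list option) \<Rightarrow> bool" where
  "le_star eta nu \<longleftrightarrow>
     (\<exists>N. \<forall>n\<ge>N. \<forall>l'. nu n = Some l' \<longrightarrow> (\<exists>l. eta n = Some l \<and> prefix l l'))"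

definition is_tower :: "'b rel \<Rightarrow> ('b \<Rightarrow> nat set) \<Rightarrow> bool" where
  "is_tower r X \<longleftrightarrow>
     (\<forall>\<alpha>\<in>Field r. infinite (X \<alpha>)) \<and>
     (\<forall>\<alpha> \<beta>. (\<alpha>, \<beta>) \<in> r \<and> \<alpha> \<noteq> \<beta> \<longrightarrow> finite (X \<beta> - X \<alpha>)) \<and>
     \<not> (\<exists>Y. infinite Y \<and> (\<forall>\<alpha>\<in>Field r. finite (Y - X \<alpha>)))"

definition tower_length :: "'b rel \<Rightarrow> bool" where
  "tower_length r \<longleftrightarrow> Well_order r \<and> (\<exists>X. is_tower r X)"

text \<open>Lengths are represented by well-orders on nat set, which has size continuum \<ge> \<t>,
  so a tower of length exactly \<t> is representable there.\<close>

definition below_t :: "'a rel \<Rightarrow> bool" where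
  "below_t d \<longleftrightarrow> Well_order d \<and>
     (\<forall>s :: nat set rel. tower_length s \<longrightarrow> (d, s) \<in> ordLess)"

end

theory Submission imports Defs "HOL-Library.Countable" "HOL-Library.Infinite_Set" begin

lemma Restr_ordLeq:
  assumes W: "Well_order r" and S: "S \<subseteq> Field r"
  shows "(Restr r S, r) \<in> ordLeq"
proof (rule ccontr)
  assume "(Restr r S, r) \<notin> ordLeq"
  hence "(r, Restr r S) \<in> ordLess" using not_ordLeq_iff_ordLess W Well_order_Restr by blast
  then obtain f where E: "embedS r (Restr r S) f" unfolding ordLess_def by blast
  have WS: "Well_order (Restr r S)" using W Well_order_Restr by blast
  have FS: "Field (Restr r S) = S"
    using Refl_Field_Restr2[OF _ S] W by (simp add: order_on_defs)
  have emb: "embed r (Restr r S) f" using E unfolding embedS_def by blast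
  have C: "compat r (Restr r S) f" using emb embed_compat by blast
  have I: "inj_on f (Field r)" using emb W embed_inj_on by blast
  have O: "wo_rel.ofilter (Restr r S) (f ` Field r)" using embed_Field_ofilter[OF W WS emb] .
  have FF: "f ` Field r \<subseteq> S" using embed_Field[OF emb] FS by simp
  have nb: "f ` Field r \<noteq> S" using E I FS unfolding embedS_def bij_betw_def by auto
  have wf: "wf (r - Id)" using W by (simp add: well_order_on_def)
  have lin: "Linear_order r" using W by (simp add: well_order_on_def)
  have tot: "\<forall>a\<in>Field r. \<forall>b\<in>Field r. a \<noteq> b \<longrightarrow> (a,b) \<in> r \<or> (b,a) \<in> r"
    using lin unfolding linear_order_on_def total_on_def by blast
  have anti: "antisym r" using lin unfolding linear_order_on_def partial_order_on_def by blast
  have refl: "\<forall>a\<in>Field r. (a,a) \<in> r"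
    using lin unfolding linear_order_on_def partial_order_on_def preorder_on_def refl_on_def by blast
  have up: "\<forall>a\<in>Field r. (a, f a) \<in> r"
  proof
    fix a assume "a \<in> Field r"
    then show "(a, f a) \<in> r"
    proof (induction a rule: wf_induct_rule[OF wf])
      case (1 a)
      show ?case
      proof (rule ccontr)
        assume na: "(a, f a) \<notin> r"
        have faF: "f a \<in> Field r" using FF 1(2) S by blast
        have ne: "f a \<noteq> a" using na refl 1(2) by auto
        have lt: "(f a, a) \<in> r" using tot 1(2) faF ne na by blast
        have ih: "(f a, f (f a)) \<in> r" using 1(1)[of "f a"] lt ne faF by blast
        have c2: "(f (f a), f a) \<in> r" using C lt unfolding compat_def by auto
        have ne2: "f (f a) \<noteq> f a" using I ne faF 1(2) unfolding inj_on_def by blast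
        show False using anti ih c2 ne2 unfolding antisym_def by blast
      qed
    qed
  qed
  obtain b where b: "b \<in> S" "b \<notin> f ` Field r" using FF nb by blast
  have bF: "b \<in> Field r" using b S by blast
  have "(b, f b) \<in> Restr r S" using up bF b FF by blast
  hence "b \<in> f ` Field r" using O bF unfolding wo_rel.ofilter_def[OF wo_rel.intro[OF WS]] under_def by blast
  thus False using b by blast
qed

lemma PI_nat:
  fixes X :: "'b \<Rightarrow> nat set" and r :: "'b rel" and d :: "'a rel"
  assumes bt: "below_t d" and W: "Well_order r" and le: "(r, d) \<in> ordLeq"
    and inf: "\<forall>\<alpha>\<in>Field r. infinite (X \<alpha>)"
    and dec: "\<forall>\<alpha> \<beta>. (\<alpha>,\<beta>)\<in>r \<and> \<alpha>\<noteq>\<beta> \<longrightarrow> finite (X \<beta> - X \<alpha>)"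
  shows "\<exists>Y. infinite Y \<and> (\<forall>\<alpha>\<in>Field r. finite (Y - X \<alpha>))"
proof (rule ccontr)
  assume np: "\<not> (\<exists>Y. infinite Y \<and> (\<forall>\<alpha>\<in>Field r. finite (Y - X \<alpha>)))"
  define S where "S = {\<alpha>\<in>Field r. \<forall>\<beta>. (\<beta>,\<alpha>)\<in>r \<and> \<beta>\<noteq>\<alpha> \<longrightarrow> X \<beta> \<noteq> X \<alpha>}"
  have wf: "wf (r - Id)" using W by (simp add: well_order_on_def)
  have lin: "Linear_order r" using W by (simp add: well_order_on_def)
  have tot: "\<forall>a\<in>Field r. \<forall>b\<in>Field r. a \<noteq> b \<longrightarrow> (a,b) \<in> r \<or> (b,a) \<in> r"
    using lin unfolding linear_order_on_def total_on_def by blast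
  have rep: "\<exists>\<beta>\<in>S. X \<beta> = X \<alpha>" if a: "\<alpha> \<in> Field r" for \<alpha>
  proof -
    have "\<alpha> \<in> {\<beta>\<in>Field r. X \<beta> = X \<alpha>}" using a by simp
    then obtain \<beta> where b: "\<beta> \<in> {\<beta>\<in>Field r. X \<beta> = X \<alpha>}"
      and m: "\<And>\<gamma>. (\<gamma>,\<beta>) \<in> r - Id \<Longrightarrow> \<gamma> \<notin> {\<beta>\<in>Field r. X \<beta> = X \<alpha>}"
      by (rule wfE_min[OF wf]) blast
    have "\<beta> \<in> S" unfolding S_def
    proof (intro CollectI conjI allI impI)
      show "\<beta> \<in> Field r" using b by simp
    next
      fix \<gamma> assume g: "(\<gamma>, \<beta>) \<in> r \<and> \<gamma> \<noteq> \<beta>"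
      hence "\<gamma> \<in> Field r" by (blast intro: FieldI1)
      moreover have "\<gamma> \<notin> {\<beta>\<in>Field r. X \<beta> = X \<alpha>}" using m g by blast
      ultimately show "X \<gamma> \<noteq> X \<beta>" using b by simp
    qed
    thus ?thesis using b by blast
  qed
  have SF: "S \<subseteq> Field r" unfolding S_def by blast
  have injS: "inj_on X S"
  proof (rule inj_onI)
    fix a b assume ab: "a \<in> S" "b \<in> S" "X a = X b"
    show "a = b"
    proof (rule ccontr)
      assume "a \<noteq> b"
      hence "(a,b) \<in> r \<or> (b,a) \<in> r" using tot ab SF by blast
      moreover have "\<forall>\<beta>. (\<beta>,b)\<in>r \<and> \<beta>\<noteq>b \<longrightarrow> X \<beta> \<noteq> X b" using ab(2) unfolding S_def by blast
      moreover have "\<forall>\<beta>. (\<beta>,a)\<in>r \<and> \<beta>\<noteq>a \<longrightarrow> X \<beta> \<noteq> X a" using ab(1) unfolding S_def by blast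
      ultimately show False using ab(3) \<open>a \<noteq> b\<close> by auto
    qed
  qed
  have FRS: "Field (Restr r S) = S"
    using Refl_Field_Restr2[OF _ SF] W by (simp add: order_on_defs)
  define s where "s = dir_image (Restr r S) X"
  have WRS: "Well_order (Restr r S)" using W Well_order_Restr by blast
  have Ws: "Well_order s" unfolding s_def using Well_order_dir_image[OF WRS] injS FRS by simp
  have iso: "(Restr r S, s) \<in> ordIso" unfolding s_def using dir_image_ordIso[OF WRS] injS FRS by simp
  have s1: "(s, Restr r S) \<in> ordLeq" using ordIso_imp_ordLeq[OF ordIso_symmetric[OF iso]] .
  have s2: "(Restr r S, r) \<in> ordLeq" using Restr_ordLeq[OF W SF] .
  have sd: "(s, d) \<in> ordLeq" using ordLeq_transitive[OF ordLeq_transitive[OF s1 s2] le] .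
  have Fs: "Field s = X ` S" unfolding s_def dir_image_Field FRS ..
  have "is_tower s id"
    unfolding is_tower_def
  proof (intro conjI allI impI)
    show "\<forall>\<alpha>\<in>Field s. infinite (id \<alpha>)" using Fs inf SF by auto
  next
    fix a b assume ab: "(a, b) \<in> s \<and> a \<noteq> b"
    then obtain x y where xy: "a = X x" "b = X y" "(x,y) \<in> Restr r S"
      unfolding s_def dir_image_def by blast
    hence "(x,y) \<in> r" "x \<noteq> y" using ab by auto
    thus "finite (id b - id a)" using dec xy(1,2) by auto
  next
    show "\<not> (\<exists>Y. infinite Y \<and> (\<forall>\<alpha>\<in>Field s. finite (Y - id \<alpha>)))"
    proof
      assume "\<exists>Y. infinite Y \<and> (\<forall>\<alpha>\<in>Field s. finite (Y - id \<alpha>))"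
      then obtain Y where Y: "infinite Y" "\<forall>\<alpha>\<in>Field s. finite (Y - id \<alpha>)" by blast
      have "\<forall>\<alpha>\<in>Field r. finite (Y - X \<alpha>)"
      proof
        fix \<alpha> assume "\<alpha> \<in> Field r"
        then obtain \<beta> where "\<beta> \<in> S" "X \<beta> = X \<alpha>" using rep by blast
        hence "X \<beta> \<in> Field s" using Fs by (metis imageI)
        hence "finite (Y - id (X \<beta>))" using Y(2) by blast
        thus "finite (Y - X \<alpha>)" using \<open>X \<beta> = X \<alpha>\<close> by simp
      qed
      thus False using np Y(1) by blast
    qed
  qed
  hence "tower_length s" unfolding tower_length_def using Ws by blast
  hence "(d, s) \<in> ordLess" using bt unfolding below_t_def by blast
  thus False using sd not_ordLess_ordLeq by blast
qed

lemma PI: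
  fixes X :: "'b \<Rightarrow> 'c::countable set" and r :: "'b rel" and d :: "'a rel"
  assumes bt: "below_t d" and W: "Well_order r" and le: "(r, d) \<in> ordLeq"
    and inf: "\<forall>\<alpha>\<in>Field r. infinite (X \<alpha>)"
    and dec: "\<forall>\<alpha> \<beta>. (\<alpha>,\<beta>)\<in>r \<and> \<alpha>\<noteq>\<beta> \<longrightarrow> finite (X \<beta> - X \<alpha>)"
    and a0: "\<alpha>0 \<in> Field r"
  shows "\<exists>Y. infinite Y \<and> Y \<subseteq> X \<alpha>0 \<and> (\<forall>\<alpha>\<in>Field r. finite (Y - X \<alpha>))"
proof -
  define X' where "X' = (\<lambda>\<alpha>. to_nat ` X \<alpha>)"
  have inf': "\<forall>\<alpha>\<in>Field r. infinite (X' \<alpha>)" using inf unfolding X'_def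
    by (simp add: finite_image_iff)
  have dec': "\<forall>\<alpha> \<beta>. (\<alpha>,\<beta>)\<in>r \<and> \<alpha>\<noteq>\<beta> \<longrightarrow> finite (X' \<beta> - X' \<alpha>)"
    unfolding X'_def
  proof (intro allI impI)
    fix a b assume "(a, b) \<in> r \<and> a \<noteq> b"
    hence "finite (X b - X a)" using dec by blast
    hence "finite (to_nat ` (X b - X a))" by simp
    moreover have "to_nat ` (X b - X a) = to_nat ` X b - to_nat ` X a"
      using image_set_diff[OF inj_to_nat] by blast
    ultimately show "finite (to_nat ` X b - to_nat ` X a)" by simp
  qed
  obtain Z where Z: "infinite Z" "\<forall>\<alpha>\<in>Field r. finite (Z - X' \<alpha>)"
    using PI_nat[OF bt W le inf' dec'] by blast
  define Y where "Y = {x\<in>X \<alpha>0. to_nat x \<in> Z}"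
  have "to_nat ` Y = Z \<inter> X' \<alpha>0" unfolding Y_def X'_def by auto
  moreover have "infinite (Z \<inter> X' \<alpha>0)"
  proof
    assume "finite (Z \<inter> X' \<alpha>0)"
    hence "finite ((Z \<inter> X' \<alpha>0) \<union> (Z - X' \<alpha>0))" using Z(2) a0 by blast
    moreover have "(Z \<inter> X' \<alpha>0) \<union> (Z - X' \<alpha>0) = Z" by blast
    ultimately show False using Z(1) by simp
  qed
  ultimately have "infinite Y" by (metis finite_imageI)
  moreover have "finite (Y - X \<alpha>)" if a: "\<alpha> \<in> Field r" for \<alpha>
  proof -
    have "to_nat ` (Y - X \<alpha>) \<subseteq> Z - X' \<alpha>" unfolding Y_def X'_def by auto
    hence "finite (to_nat ` (Y - X \<alpha>))" using Z(2) a finite_subset by blast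
    thus ?thesis by (simp add: finite_image_iff)
  qed
  ultimately show ?thesis unfolding Y_def by blast
qed

definition good :: "(nat \<Rightarrow> nat) \<Rightarrow> nat set \<Rightarrow> bool" where
  "good g A \<longleftrightarrow> (\<exists>N. \<forall>a\<in>A. \<forall>b\<in>A. N \<le> a \<longrightarrow> a < b \<longrightarrow> g a \<le> b)"

primrec tseq :: "(nat \<Rightarrow> nat) \<Rightarrow> nat set \<Rightarrow> nat \<Rightarrow> nat" where
  "tseq g Y 0 = (SOME y. y \<in> Y)"
| "tseq g Y (Suc k) = (SOME y. y \<in> Y \<and> tseq g Y k + g (tseq g Y k) < y)"

declare tseq.simps[simp del]

lemma tseq_step:
  assumes "infinite Y"
  shows "tseq g Y (Suc k) \<in> Y \<and> tseq g Y k + g (tseq g Y k) < tseq g Y (Suc k)"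
proof -
  have "\<exists>y. y \<in> Y \<and> tseq g Y k + g (tseq g Y k) < y"
    using assms unfolding infinite_nat_iff_unbounded by blast
  from someI_ex[OF this] show ?thesis by (simp only: tseq.simps(2))
qed

lemma tseq_in:
  assumes "infinite Y"
  shows "tseq g Y k \<in> Y"
proof (cases k)
  case 0
  have ex: "\<exists>y. y \<in> Y" using assms by (metis ex_in_conv finite.emptyI)
  show ?thesis using 0 someI_ex[OF ex] by (simp only: tseq.simps(1))
next
  case (Suc m)
  thus ?thesis using tseq_step[OF assms] by blast
qed

lemma thin:
  assumes "infinite (Y::nat set)"
  shows "\<exists>Y'\<subseteq>Y. infinite Y' \<and> good g Y'"
proof -
  let ?t = "tseq g Y"
  have sm: "strict_mono ?t"
    unfolding strict_mono_Suc_iff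
  proof
    fix n show "tseq g Y n < tseq g Y (Suc n)" using tseq_step[OF assms, where k=n and g=g] by linarith
  qed
  have "infinite (range ?t)"
    using range_inj_infinite[OF strict_mono_imp_inj_on[OF sm]] .
  moreover have "range ?t \<subseteq> Y" using tseq_in[OF assms] by blast
  moreover have "good g (range ?t)"
    unfolding good_def
  proof (intro exI[of _ 0] ballI impI)
    fix a b assume "a \<in> range ?t" "b \<in> range ?t" "a < b"
    then obtain i j where ij: "a = ?t i" "b = ?t j" by blast
    have "?t i < ?t j" using \<open>a < b\<close> ij by simp
    hence "i < j" using strict_mono_less[OF sm] by simp
    hence "?t (Suc i) \<le> ?t j" using sm by (simp add: strict_mono_less_eq)
    moreover have "?t i + g (?t i) < ?t (Suc i)" using tseq_step[OF assms] by blast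
    ultimately have "g (?t i) \<le> ?t j" by linarith
    thus "g a \<le> b" using ij by simp
  qed
  ultimately show ?thesis by blast
qed

lemma good_sub:
  assumes "good g A" "finite (A' - A)"
  shows "good g A'"
proof -
  obtain N where N: "\<forall>a\<in>A. \<forall>b\<in>A. N \<le> a \<longrightarrow> a < b \<longrightarrow> g a \<le> b"
    using assms(1) unfolding good_def by blast
  obtain M where M: "\<forall>x\<in>A' - A. x < M"
    using assms(2) finite_nat_set_iff_bounded by blast
  show ?thesis unfolding good_def
  proof (intro exI[of _ "max N M"] ballI impI)
    fix a b assume ab: "a \<in> A'" "b \<in> A'" "max N M \<le> a" "a < b"
    have "M \<le> a" using ab(3) by simp
    have "a \<in> A"
    proof (rule ccontr)
      assume "a \<notin> A"
      hence "a \<in> A' - A" using ab(1) by blast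
      hence "a < M" using M by blast
      thus False using \<open>M \<le> a\<close> by simp
    qed
    moreover have "b \<in> A"
    proof (rule ccontr)
      assume "b \<notin> A"
      hence "b \<in> A' - A" using ab(2) by blast
      hence "b < M" using M by blast
      thus False using \<open>M \<le> a\<close> ab(4) by simp
    qed
    ultimately have "a \<in> A" "b \<in> A" by auto
    thus "g a \<le> b" using N ab by auto
  qed
qed

lemma stage1:
  fixes d :: "'a rel" and g :: "'a \<Rightarrow> nat \<Rightarrow> nat"
  assumes bt: "below_t d" and B: "infinite B"
  shows "\<exists>A\<subseteq>B. infinite A \<and> (\<forall>\<alpha>\<in>Field d. good (g \<alpha>) A)"
proof -
  have W: "Well_order d" using bt unfolding below_t_def by blast
  define R where "R = d - Id"
  have wf: "wf R" using W unfolding R_def by (simp add: well_order_on_def)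
  define P where "P = (\<lambda>f \<alpha>. SOME Y. infinite Y \<and> Y \<subseteq> B \<and> (\<forall>\<beta>. (\<beta>,\<alpha>)\<in>R \<longrightarrow> finite (Y - f \<beta>)))"
  define F where "F = (\<lambda>f \<alpha>. SOME Y'. Y' \<subseteq> P f \<alpha> \<and> infinite Y' \<and> good (g \<alpha>) Y')"
  define A where "A = wfrec R F"
  have Aeq: "A \<alpha> = F A \<alpha>" for \<alpha>
  proof -
    have "A \<alpha> = F (cut A R \<alpha>) \<alpha>" unfolding A_def using wfrec[OF wf] .
    moreover have "P (cut A R \<alpha>) \<alpha> = P A \<alpha>" unfolding P_def
      by (rule arg_cong[where f=Eps]) (auto simp: cut_apply fun_eq_iff)
    ultimately show ?thesis unfolding F_def by simp
  qed
  have Q: "\<alpha> \<in> Field d \<longrightarrow> (infinite (A \<alpha>) \<and> A \<alpha> \<subseteq> B \<and> good (g \<alpha>) (A \<alpha>) \<and>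
      (\<forall>\<beta>. (\<beta>,\<alpha>) \<in> R \<longrightarrow> finite (A \<alpha> - A \<beta>)))" for \<alpha>
  proof (induction \<alpha> rule: wf_induct_rule[OF wf])
    case (1 \<alpha>)
    show ?case
    proof
      assume aF: "\<alpha> \<in> Field d"
      have ex: "\<exists>Y. infinite Y \<and> Y \<subseteq> B \<and> (\<forall>\<beta>. (\<beta>,\<alpha>)\<in>R \<longrightarrow> finite (Y - A \<beta>))"
      proof (cases "\<exists>\<beta>0. (\<beta>0,\<alpha>) \<in> R")
        case False
        thus ?thesis using B by blast
      next
        case True
        then obtain \<beta>0 where b0: "(\<beta>0,\<alpha>) \<in> R" by blast
        let ?r = "Restr d (underS d \<alpha>)"
        have Fr: "Field ?r = underS d \<alpha>"
          using Field_Restr_ofilter[OF W] wo_rel.underS_ofilter[of d] W unfolding wo_rel_def by blast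
        have Wr: "Well_order ?r" using W Well_order_Restr by blast
        have lr: "(?r, d) \<in> ordLeq"
          using underS_Restr_ordLess[OF W] aF ordLess_imp_ordLeq by blast
        have uR: "\<beta> \<in> underS d \<alpha> \<longleftrightarrow> (\<beta>,\<alpha>) \<in> R" for \<beta>
          unfolding underS_def R_def by auto
        have Rf: "(\<beta>,\<alpha>) \<in> R \<Longrightarrow> \<beta> \<in> Field d" for \<beta> unfolding R_def by (blast intro: FieldI1)
        have inf: "\<forall>\<beta>\<in>Field ?r. infinite (A \<beta>)" using 1 Fr uR Rf by blast
        have dec: "\<forall>\<beta> \<gamma>. (\<beta>,\<gamma>)\<in>?r \<and> \<beta>\<noteq>\<gamma> \<longrightarrow> finite (A \<gamma> - A \<beta>)"
        proof (intro allI impI)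
          fix \<beta> \<gamma> assume h: "(\<beta>,\<gamma>)\<in>?r \<and> \<beta>\<noteq>\<gamma>"
          hence "(\<gamma>,\<alpha>) \<in> R" "(\<beta>,\<gamma>) \<in> R" using uR unfolding R_def by auto
          thus "finite (A \<gamma> - A \<beta>)" using 1 Rf by blast
        qed
        have b0F: "\<beta>0 \<in> Field ?r" using Fr uR b0 by blast
        obtain Y where Y: "infinite Y" "Y \<subseteq> A \<beta>0" "\<forall>\<beta>\<in>Field ?r. finite (Y - A \<beta>)"
          using PI[OF bt Wr lr inf dec b0F] by blast
        have "A \<beta>0 \<subseteq> B" using 1(1)[OF b0] Rf[OF b0] by blast
        hence "Y \<subseteq> B" using Y(2) by blast
        moreover have "\<forall>\<beta>. (\<beta>,\<alpha>)\<in>R \<longrightarrow> finite (Y - A \<beta>)"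
        proof (intro allI impI)
          fix \<beta> assume "(\<beta>,\<alpha>)\<in>R"
          hence "\<beta> \<in> Field ?r" using Fr uR by blast
          thus "finite (Y - A \<beta>)" using Y(3) by blast
        qed
        ultimately show ?thesis using Y(1) by blast
      qed
      have Pp: "infinite (P A \<alpha>) \<and> P A \<alpha> \<subseteq> B \<and> (\<forall>\<beta>. (\<beta>,\<alpha>)\<in>R \<longrightarrow> finite (P A \<alpha> - A \<beta>))"
        unfolding P_def using someI_ex[OF ex] .
      have ex2: "\<exists>Y'. Y' \<subseteq> P A \<alpha> \<and> infinite Y' \<and> good (g \<alpha>) Y'" using thin Pp by blast
      have Aal: "A \<alpha> = (SOME Y'. Y' \<subseteq> P A \<alpha> \<and> infinite Y' \<and> good (g \<alpha>) Y')"
        using Aeq[of \<alpha>] unfolding F_def .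
      have Fp: "A \<alpha> \<subseteq> P A \<alpha> \<and> infinite (A \<alpha>) \<and> good (g \<alpha>) (A \<alpha>)"
        unfolding Aal by (rule someI_ex[OF ex2])
      show "infinite (A \<alpha>) \<and> A \<alpha> \<subseteq> B \<and> good (g \<alpha>) (A \<alpha>) \<and>
        (\<forall>\<beta>. (\<beta>,\<alpha>) \<in> R \<longrightarrow> finite (A \<alpha> - A \<beta>))"
      proof (intro conjI allI impI)
        show "infinite (A \<alpha>)" "good (g \<alpha>) (A \<alpha>)" using Fp by auto
        show "A \<alpha> \<subseteq> B" using Fp Pp by blast
        fix \<beta> assume "(\<beta>, \<alpha>) \<in> R"
        hence "finite (P A \<alpha> - A \<beta>)" using Pp by blast
        thus "finite (A \<alpha> - A \<beta>)" using Fp by (meson Diff_mono finite_subset order_refl)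
      qed
    qed
  qed
  show ?thesis
  proof (cases "Field d = {}")
    case True
    thus ?thesis using B by blast
  next
    case False
    then obtain \<alpha>0 where a0: "\<alpha>0 \<in> Field d" by blast
    have inf: "\<forall>\<beta>\<in>Field d. infinite (A \<beta>)" using Q by blast
    have dec: "\<forall>\<beta> \<gamma>. (\<beta>,\<gamma>)\<in>d \<and> \<beta>\<noteq>\<gamma> \<longrightarrow> finite (A \<gamma> - A \<beta>)"
    proof (intro allI impI)
      fix \<beta> \<gamma> assume h: "(\<beta>,\<gamma>)\<in>d \<and> \<beta>\<noteq>\<gamma>"
      hence "\<gamma> \<in> Field d" "(\<beta>,\<gamma>) \<in> R" unfolding R_def by (auto intro: FieldI2)
      thus "finite (A \<gamma> - A \<beta>)" using Q by blast
    qed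
    obtain Y where Y: "infinite Y" "Y \<subseteq> A \<alpha>0" "\<forall>\<beta>\<in>Field d. finite (Y - A \<beta>)"
      using PI[OF bt W ordLeq_reflexive[OF W] inf dec a0] by blast
    have "\<forall>\<alpha>\<in>Field d. good (g \<alpha>) Y" using Q Y good_sub by blast
    moreover have "Y \<subseteq> B" using Y Q a0 by blast
    ultimately show ?thesis using Y by blast
  qed
qed

lemma fin_bool_lists: "finite {\<sigma>::bool list. length \<sigma> = k}"
  using finite_lists_length_eq[where A="UNIV :: bool set" and n=k] by simp

theorem lemma2p7:
  fixes d :: "'a rel" and eta :: "'a \<Rightarrow> nat \<Rightarrow> bool list option"
  assumes "below_t d"
    and "\<forall>\<alpha>\<in>Field d. inS (eta \<alpha>)"
    and "\<forall>\<alpha> \<beta>. (\<alpha>, \<beta>) \<in> d \<and> \<alpha> \<noteq> \<beta> \<longrightarrow> le_star (eta \<alpha>) (eta \<beta>)"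
  shows "\<exists>nu. inS nu \<and> (\<forall>\<alpha>\<in>Field d. le_star (eta \<alpha>) nu)"
proof -
  have W: "Well_order d" using assms(1) unfolding below_t_def by blast
  show ?thesis
  proof (cases "Field d = {}")
    case True
    have "inS (\<lambda>n. Some [True])" unfolding inS_def by simp
    thus ?thesis using True by blast
  next
    case False
    then obtain \<alpha>0 where a0: "\<alpha>0 \<in> Field d" by blast
    define D where "D = (\<lambda>\<alpha>. {n. eta \<alpha> n \<noteq> None})"
    have infD: "\<forall>\<alpha>\<in>Field d. infinite (D \<alpha>)" using assms(2) unfolding inS_def D_def by blast
    have decD: "\<forall>\<alpha> \<beta>. (\<alpha>,\<beta>)\<in>d \<and> \<alpha>\<noteq>\<beta> \<longrightarrow> finite (D \<beta> - D \<alpha>)"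
    proof (intro allI impI)
      fix \<alpha> \<beta> assume "(\<alpha>,\<beta>)\<in>d \<and> \<alpha>\<noteq>\<beta>"
      hence "le_star (eta \<alpha>) (eta \<beta>)" using assms(3) by blast
      then obtain N where N: "\<forall>n\<ge>N. \<forall>l'. eta \<beta> n = Some l' \<longrightarrow> (\<exists>l. eta \<alpha> n = Some l \<and> prefix l l')"
        unfolding le_star_def by blast
      have "D \<beta> - D \<alpha> \<subseteq> {..<N}"
      proof
        fix n assume n: "n \<in> D \<beta> - D \<alpha>"
        show "n \<in> {..<N}"
        proof (rule ccontr)
          assume "n \<notin> {..<N}"
          hence "N \<le> n" by simp
          moreover obtain l' where "eta \<beta> n = Some l'" using n unfolding D_def by auto
          ultimately have "eta \<alpha> n \<noteq> None" using N by fastforce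
          thus False using n unfolding D_def by simp
        qed
      qed
      thus "finite (D \<beta> - D \<alpha>)" using finite_subset by blast
    qed
    obtain B where B: "infinite B" "B \<subseteq> D \<alpha>0" "\<forall>\<alpha>\<in>Field d. finite (B - D \<alpha>)"
      using PI[OF assms(1) W ordLeq_reflexive[OF W] infD decD a0] by blast
    define g where "g = (\<lambda>\<alpha> n. case eta \<alpha> n of None \<Rightarrow> 0 | Some l \<Rightarrow> length l)"
    obtain A where A: "A \<subseteq> B" "infinite A" "\<forall>\<alpha>\<in>Field d. good (g \<alpha>) A"
      using stage1[OF assms(1) B(1)] by blast
    define h where "h = (\<lambda>n. Suc (LEAST b. b \<in> A \<and> n < b))"
    have hb: "\<exists>N. \<forall>n\<in>A. N \<le> n \<longrightarrow> n \<in> D \<alpha> \<and> g \<alpha> n \<le> h n" if aF: "\<alpha> \<in> Field d" for \<alpha>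
    proof -
      obtain N1 where N1: "\<forall>a\<in>A. \<forall>b\<in>A. N1 \<le> a \<longrightarrow> a < b \<longrightarrow> g \<alpha> a \<le> b"
        using A(3) aF unfolding good_def by blast
      have "finite (A - D \<alpha>)" using B(3) aF A(1) finite_subset[of "A - D \<alpha>" "B - D \<alpha>"] by blast
      then obtain M where M: "\<forall>x\<in>A - D \<alpha>. x < M" using finite_nat_set_iff_bounded by blast
      show ?thesis
      proof (intro exI[of _ "max N1 M"] ballI impI conjI)
        fix n assume n: "n \<in> A" "max N1 M \<le> n"
        show "n \<in> D \<alpha>"
        proof (rule ccontr)
          assume "n \<notin> D \<alpha>"
          hence "n < M" using M n(1) by blast
          thus False using n(2) by simp
        qed
        have "\<exists>b. b \<in> A \<and> n < b" using A(2) unfolding infinite_nat_iff_unbounded by blast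
        hence L: "(LEAST b. b \<in> A \<and> n < b) \<in> A \<and> n < (LEAST b. b \<in> A \<and> n < b)"
          by (rule LeastI_ex)
        have "N1 \<le> n" using n(2) by simp
        hence "g \<alpha> n \<le> (LEAST b. b \<in> A \<and> n < b)" using N1 n(1) L by blast
        thus "g \<alpha> n \<le> h n" unfolding h_def by simp
      qed
    qed
    define T where "T = {(n, \<sigma>::bool list). n \<in> A \<and> length \<sigma> = h n}"
    define Y where "Y = (\<lambda>\<alpha>. {(n,\<sigma>). (n,\<sigma>) \<in> T \<and> (\<exists>l. eta \<alpha> n = Some l \<and> prefix l \<sigma>)})"
    have YT: "Y \<alpha> \<subseteq> T" for \<alpha> unfolding Y_def by blast
    have TS: "U \<subseteq> T \<Longrightarrow> U \<subseteq> Sigma (fst ` U) (\<lambda>n. {\<sigma>::bool list. length \<sigma> = h n})" for U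
      unfolding T_def by force
    have finT: "finite {p \<in> T. fst p < N}" for N
    proof -
      have "{p \<in> T. fst p < N} \<subseteq> Sigma {..<N} (\<lambda>n. {\<sigma>::bool list. length \<sigma> = h n})"
        unfolding T_def by auto
      moreover have "finite (Sigma {..<N} (\<lambda>n. {\<sigma>::bool list. length \<sigma> = h n}))"
        using fin_bool_lists by blast
      ultimately show ?thesis using finite_subset by blast
    qed
    have infY: "\<forall>\<alpha>\<in>Field d. infinite (Y \<alpha>)"
    proof
      fix \<alpha> assume aF: "\<alpha> \<in> Field d"
      obtain N where N: "\<forall>n\<in>A. N \<le> n \<longrightarrow> n \<in> D \<alpha> \<and> g \<alpha> n \<le> h n" using hb[OF aF] by blast
      have sub: "{n\<in>A. N \<le> n} \<subseteq> fst ` Y \<alpha>"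
      proof
        fix n assume n: "n \<in> {n\<in>A. N \<le> n}"
        hence nD: "n \<in> D \<alpha>" and gn: "g \<alpha> n \<le> h n" using N by auto
        then obtain l where l: "eta \<alpha> n = Some l" unfolding D_def by auto
        hence "length l \<le> h n" using gn unfolding g_def by simp
        hence "(n, l @ replicate (h n - length l) False) \<in> Y \<alpha>"
          unfolding Y_def T_def using n l by auto
        thus "n \<in> fst ` Y \<alpha>" by force
      qed
      have "infinite {n\<in>A. N \<le> n}"
      proof
        assume f: "finite {n\<in>A. N \<le> n}"
        have "A \<subseteq> {n\<in>A. N \<le> n} \<union> {..<N}" by auto
        hence "finite A" using f finite_subset by blast
        thus False using A(2) by blast
      qed
      hence "infinite (fst ` Y \<alpha>)" using sub finite_subset by blast
      thus "infinite (Y \<alpha>)" by blast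
    qed
    have decY: "\<forall>\<alpha> \<beta>. (\<alpha>,\<beta>)\<in>d \<and> \<alpha>\<noteq>\<beta> \<longrightarrow> finite (Y \<beta> - Y \<alpha>)"
    proof (intro allI impI)
      fix \<alpha> \<beta> assume "(\<alpha>,\<beta>)\<in>d \<and> \<alpha>\<noteq>\<beta>"
      hence "le_star (eta \<alpha>) (eta \<beta>)" using assms(3) by blast
      then obtain N where N: "\<forall>n\<ge>N. \<forall>l'. eta \<beta> n = Some l' \<longrightarrow> (\<exists>l. eta \<alpha> n = Some l \<and> prefix l l')"
        unfolding le_star_def by blast
      have "Y \<beta> - Y \<alpha> \<subseteq> {p \<in> T. fst p < N}"
      proof
        fix p assume p: "p \<in> Y \<beta> - Y \<alpha>"
        obtain n \<sigma> where pn: "p = (n, \<sigma>)" by fastforce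
        have pT: "p \<in> T" using p YT by blast
        obtain l' where l': "eta \<beta> n = Some l'" "prefix l' \<sigma>" using p pn unfolding Y_def by blast
        show "p \<in> {p \<in> T. fst p < N}"
        proof (rule ccontr)
          assume "p \<notin> {p \<in> T. fst p < N}"
          hence "N \<le> n" using pT pn by auto
          then obtain l where l: "eta \<alpha> n = Some l" "prefix l l'" using N l'(1) by blast
          hence "prefix l \<sigma>" using l'(2) prefix_order.trans by blast
          hence "p \<in> Y \<alpha>" using pT pn l unfolding Y_def by blast
          thus False using p by blast
        qed
      qed
      thus "finite (Y \<beta> - Y \<alpha>)" using finT finite_subset by blast
    qed
    obtain Z where Z: "infinite Z" "Z \<subseteq> Y \<alpha>0" "\<forall>\<alpha>\<in>Field d. finite (Z - Y \<alpha>)"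
      using PI[OF assms(1) W ordLeq_reflexive[OF W] infY decY a0] by blast
    have ZT: "Z \<subseteq> T" using Z(2) YT by blast
    define nu where "nu = (\<lambda>n. if \<exists>\<sigma>. (n,\<sigma>)\<in>Z then Some (SOME \<sigma>. (n,\<sigma>)\<in>Z) else None)"
    have nuZ: "nu n = Some l \<Longrightarrow> (n, l) \<in> Z" for n l
    proof -
      assume a: "nu n = Some l"
      hence ex: "\<exists>\<sigma>. (n,\<sigma>)\<in>Z" unfolding nu_def by (auto split: if_splits)
      hence "l = (SOME \<sigma>. (n,\<sigma>)\<in>Z)" using a unfolding nu_def by simp
      thus ?thesis using someI_ex[OF ex] by simp
    qed
    have dom: "{n. nu n \<noteq> None} = fst ` Z" unfolding nu_def by force
    have "inS nu" unfolding inS_def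
    proof (intro conjI allI impI)
      show "infinite {n. nu n \<noteq> None}"
      proof
        assume "finite {n. nu n \<noteq> None}"
        hence "finite (fst ` Z)" using dom by simp
        hence "finite (Sigma (fst ` Z) (\<lambda>n. {\<sigma>::bool list. length \<sigma> = h n}))"
          using fin_bool_lists by blast
        hence "finite Z" using TS[OF ZT] finite_subset by blast
        thus False using Z(1) by blast
      qed
    next
      fix n l assume "nu n = Some l"
      hence "(n,l) \<in> T" using nuZ ZT by blast
      hence "length l = h n" unfolding T_def by blast
      thus "l \<noteq> []" unfolding h_def by auto
    qed
    moreover have "\<forall>\<alpha>\<in>Field d. le_star (eta \<alpha>) nu"
    proof
      fix \<alpha> assume aF: "\<alpha> \<in> Field d"
      have "finite (fst ` (Z - Y \<alpha>))" using Z(3) aF by blast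
      then obtain M where M: "\<forall>x\<in>fst ` (Z - Y \<alpha>). x < M" using finite_nat_set_iff_bounded by blast
      show "le_star (eta \<alpha>) nu" unfolding le_star_def
      proof (intro exI[of _ M] allI impI)
        fix n l' assume n: "M \<le> n" "nu n = Some l'"
        hence inZ: "(n, l') \<in> Z" using nuZ by blast
        have "(n, l') \<in> Y \<alpha>"
        proof (rule ccontr)
          assume "(n, l') \<notin> Y \<alpha>"
          hence "n \<in> fst ` (Z - Y \<alpha>)" using inZ by force
          hence "n < M" using M by blast
          thus False using n(1) by simp
        qed
        thus "\<exists>l. eta \<alpha> n = Some l \<and> prefix l l'" unfolding Y_def by blast
      qed
    qed
    ultimately show ?thesis by blast
  qed
qed

end
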